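(* Let $E$ be a complex Banach space with the projective approximation property. A metric current $T\in M_k(E)$ is of bidimension $(p,q)$ if and only if it is finitely of bidimension $(p,q)$, i.e. if and only if for every finite-dimensional subspace $V\subset E$ and every continuous linear projection $P:E\to V$ the current $P_\sharp T\in M_k(V)$ is of bidimension $(p,q)$.
   Context: A Banach space $E$ has the projective approximation property if there exist a constant $a$ and a family $\{E_t\}_{t\in\mathcal T}$ of finite-dimensional subspaces, directed by inclusion, with $\bigcup_tE_t$ dense in $E$, and continuous linear projections $p_t:E\to E_t$ with $\|p_t\|\le a$. Metric currents (Ambrosio–Kirchheim) on a complete metric space $Z$: with $\mathscr E^k(Z)=\mathrm{Lip}_b(Z)\times[\mathrm{Lip}(Z)]^k$ (complex-valued), a $k$-dimensional metric current is a multilinear $T:\mathscr E^k(Z)\to\mathbb C$, continuous under pointwise convergence with uniformly bounded Lipschitz constants, local ($T(f,\pi)=0$ if some $\pi_j$ is constant near $\mathrm{supp} f$), and of finite mass (there is a finite Radon measure $\mu$ with $|T(f,\pi)|\le\prod_j\mathrm{Lip}(\pi_j)\int|f|d\mu$); space $M_k(Z)$. Pushforward $P_\sharp T(f,\pi)=T(f\circ P,\pi\circ P)$. On a complex Banach space (or finite-dimensional complex vector space) $Z$, $T\in M_k(Z)$ has bidimension $(p,q)$, $p+q=k$, if $T(f,\pi_1,\dots,\pi_k)=0$ whenever $p+1$ of the $\pi_j$ are holomorphic on an open set containing $\mathrm{supp} f$, or $q+1$ of the $\overline{\pi_j}$ are holomorphic on an open set containing $\mathrm{supp} f$. *)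

theory Defs
  imports "HOL-Analysis.Analysis" "HOL-Probability.Probability"
begin

text \<open>A complex Banach space is a real Banach space E together with a real-linear
  map J (multiplication by the imaginary unit) with J o J = -id, such that the
  complex scalar multiplication  c.x = Re c x + Im c J x  satisfies
  norm (c.x) = cmod c * norm x.\<close>

definition cscale :: "('a::real_vector \<Rightarrow> 'a) \<Rightarrow> complex \<Rightarrow> 'a \<Rightarrow> 'a" where
  "cscale J c x = Re c *\<^sub>R x + Im c *\<^sub>R J x"

definition complex_structure :: "('a::real_normed_vector \<Rightarrow> 'a) \<Rightarrow> bool" where
  "complex_structure J \<longleftrightarrow> linear J \<and> (\<forall>x. J (J x) = - x)
     \<and> (\<forall>c x. norm (cscale J c x) = cmod c * norm x)"

definition csubspace :: "('a::real_vector \<Rightarrow> 'a) \<Rightarrow> 'a set \<Rightarrow> bool" where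
  "csubspace J V \<longleftrightarrow> subspace V \<and> (\<forall>x\<in>V. J x \<in> V)"

definition fin_dim :: "'a::real_vector set \<Rightarrow> bool" where
  "fin_dim V \<longleftrightarrow> (\<exists>B. finite B \<and> V = span B)"

definition clin_projection :: "('a::real_normed_vector \<Rightarrow> 'a) \<Rightarrow> 'a set \<Rightarrow> ('a \<Rightarrow> 'a) \<Rightarrow> bool" where
  "clin_projection J V P \<longleftrightarrow> bounded_linear P \<and> (\<forall>x. P (J x) = J (P x))
     \<and> (\<forall>x. P x \<in> V) \<and> (\<forall>v\<in>V. P v = v)"

text \<open>Projective approximation property. The family {E_t} is represented by the set of
  its members (a set of subspaces), with a chosen projection p E_t for each member.\<close>
definition projective_approx_property :: "('a::real_normed_vector \<Rightarrow> 'a) \<Rightarrow> bool" where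
  "projective_approx_property J \<longleftrightarrow>
    (\<exists>(a::real) (\<E>::'a set set) (p::'a set \<Rightarrow> 'a \<Rightarrow> 'a).
       (\<forall>V\<in>\<E>. csubspace J V \<and> fin_dim V) \<and>
       \<E> \<noteq> {} \<and> (\<forall>V\<in>\<E>. \<forall>W\<in>\<E>. \<exists>U\<in>\<E>. V \<subseteq> U \<and> W \<subseteq> U) \<and>
       closure (\<Union>\<E>) = UNIV \<and>
       (\<forall>V\<in>\<E>. clin_projection J V (p V) \<and> onorm (p V) \<le> a))"

text \<open>A k-current is represented as T f \<pi> with f the bounded Lipschitz function and
  \<pi> a list of length k of Lipschitz functions; values of T outside this domain are
  irrelevant.\<close>

definition lip_fun :: "'a::metric_space set \<Rightarrow> ('a \<Rightarrow> complex) \<Rightarrow> bool" where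
  "lip_fun Z g \<longleftrightarrow> (\<exists>C. C-lipschitz_on Z g)"

definition blip_fun :: "'a::metric_space set \<Rightarrow> ('a \<Rightarrow> complex) \<Rightarrow> bool" where
  "blip_fun Z f \<longleftrightarrow> lip_fun Z f \<and> bounded (f ` Z)"

definition Lip :: "'a::metric_space set \<Rightarrow> ('a \<Rightarrow> complex) \<Rightarrow> real" where
  "Lip Z g = Inf {C. C-lipschitz_on Z g}"

definition dom_ok :: "'a::metric_space set \<Rightarrow> nat \<Rightarrow> ('a \<Rightarrow> complex) \<Rightarrow> ('a \<Rightarrow> complex) list \<Rightarrow> bool" where
  "dom_ok Z k f \<pi> \<longleftrightarrow> blip_fun Z f \<and> length \<pi> = k \<and> (\<forall>g\<in>set \<pi>. lip_fun Z g)"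

definition supp_in :: "'a::metric_space set \<Rightarrow> ('a \<Rightarrow> complex) \<Rightarrow> 'a set" where
  "supp_in Z f = Z \<inter> closure {x\<in>Z. f x \<noteq> 0}"

definition finite_radon_measure :: "'a::metric_space measure \<Rightarrow> bool" where
  "finite_radon_measure \<mu> \<longleftrightarrow> sets \<mu> = sets borel \<and> emeasure \<mu> (space \<mu>) < \<infinity> \<and>
     (\<forall>A\<in>sets borel. emeasure \<mu> A = (SUP K\<in>{K. compact K \<and> K \<subseteq> A}. emeasure \<mu> K))"

definition metric_current :: "nat \<Rightarrow> (('a::metric_space \<Rightarrow> complex) \<Rightarrow> ('a \<Rightarrow> complex) list \<Rightarrow> complex) \<Rightarrow> bool" where
  "metric_current k T \<longleftrightarrow>
    \<comment> \<open>multilinearity\<close>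
    (\<forall>f g \<pi> a b. dom_ok UNIV k f \<pi> \<longrightarrow> blip_fun UNIV g \<longrightarrow>
        T (\<lambda>x. a * f x + b * g x) \<pi> = a * T f \<pi> + b * T g \<pi>) \<and>
    (\<forall>f \<pi> j g h a b. dom_ok UNIV k f \<pi> \<longrightarrow> j < k \<longrightarrow> lip_fun UNIV g \<longrightarrow> lip_fun UNIV h \<longrightarrow>
        T f (\<pi>[j := (\<lambda>x. a * g x + b * h x)]) = a * T f (\<pi>[j := g]) + b * T f (\<pi>[j := h])) \<and>
    \<comment> \<open>continuity\<close>
    (\<forall>f \<pi> \<pi>s. dom_ok UNIV k f \<pi> \<longrightarrow> (\<forall>i. dom_ok UNIV k f (\<pi>s i)) \<longrightarrow>
        (\<forall>j<k. \<forall>x. (\<lambda>i. (\<pi>s i ! j) x) \<longlonglongrightarrow> (\<pi> ! j) x) \<longrightarrow>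
        (\<exists>C. \<forall>i. \<forall>j<k. C-lipschitz_on UNIV (\<pi>s i ! j)) \<longrightarrow>
        (\<lambda>i. T f (\<pi>s i)) \<longlonglongrightarrow> T f \<pi>) \<and>
    \<comment> \<open>locality\<close>
    (\<forall>f \<pi>. dom_ok UNIV k f \<pi> \<longrightarrow>
        (\<exists>j<k. \<exists>U. open U \<and> supp_in UNIV f \<subseteq> U \<and> (\<exists>c. \<forall>x\<in>U. (\<pi> ! j) x = c)) \<longrightarrow>
        T f \<pi> = 0) \<and>
    \<comment> \<open>finite mass\<close>
    (\<exists>\<mu>. finite_radon_measure \<mu> \<and>
       (\<forall>f \<pi>. dom_ok UNIV k f \<pi> \<longrightarrow>
          cmod (T f \<pi>) \<le> (\<Prod>j<k. Lip UNIV (\<pi> ! j)) * (\<integral>x. cmod (f x) \<partial>\<mu>)))"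

definition pushforward ::
  "('a \<Rightarrow> 'b) \<Rightarrow> (('a \<Rightarrow> complex) \<Rightarrow> ('a \<Rightarrow> complex) list \<Rightarrow> complex)
     \<Rightarrow> ('b \<Rightarrow> complex) \<Rightarrow> ('b \<Rightarrow> complex) list \<Rightarrow> complex" where
  "pushforward P T f \<pi> = T (f \<circ> P) (map (\<lambda>g. g \<circ> P) \<pi>)"

text \<open>g is holomorphic on U, a relatively open subset of the complex subspace Z
  (Z = E or a finite-dimensional subspace V): at every point of U it is complex
  Frechet differentiable along Z.\<close>
definition holo_on :: "('a::real_normed_vector \<Rightarrow> 'a) \<Rightarrow> 'a set \<Rightarrow> 'a set \<Rightarrow> ('a \<Rightarrow> complex) \<Rightarrow> bool" where
  "holo_on J Z U g \<longleftrightarrow> (\<forall>x\<in>U. \<exists>L. (g has_derivative L) (at x within Z) \<and>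
      (\<forall>h\<in>Z. L (J h) = \<i> * L h))"

definition bidimension :: "('a::real_normed_vector \<Rightarrow> 'a) \<Rightarrow> 'a set \<Rightarrow> nat \<Rightarrow> nat \<Rightarrow>
    (('a \<Rightarrow> complex) \<Rightarrow> ('a \<Rightarrow> complex) list \<Rightarrow> complex) \<Rightarrow> bool" where
  "bidimension J Z p q T \<longleftrightarrow>
    (\<forall>f \<pi>. dom_ok Z (p + q) f \<pi> \<longrightarrow>
       (\<exists>U. openin (top_of_set Z) U \<and> supp_in Z f \<subseteq> U \<and>
          (p + 1 \<le> card {j. j < p + q \<and> holo_on J Z U (\<pi> ! j)} \<or>
           q + 1 \<le> card {j. j < p + q \<and> holo_on J Z U (\<lambda>x. cnj ((\<pi> ! j) x))})) \<longrightarrow>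
       T f \<pi> = 0)"

end

theory Submission
  imports Defs
begin


lemma Lip_le: "C-lipschitz_on Z g \<Longrightarrow> Lip Z g \<le> C"
  unfolding Lip_def by (rule cInf_lower) (auto intro: bdd_belowI[where m=0] lipschitz_on_nonneg)

lemma Lip_nonneg: "C-lipschitz_on Z g \<Longrightarrow> 0 \<le> Lip Z g"
  unfolding Lip_def by (rule cInf_greatest) (auto intro: lipschitz_on_nonneg)

lemma prod_Lip_le:
  assumes "\<forall>j<k. C-lipschitz_on UNIV (\<sigma>!j)"
  shows "(\<Prod>j<k. Lip UNIV (\<sigma>!j)) \<le> C^k"
proof -
  have "(\<Prod>j<k. Lip UNIV (\<sigma>!j)) \<le> (\<Prod>j<k. C)"
    by (rule prod_mono) (use assms Lip_le Lip_nonneg in blast)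
  then show ?thesis by simp
qed

lemma blip_iff: "blip_fun Z f \<longleftrightarrow> (\<exists>C. C-lipschitz_on Z f) \<and> (\<exists>B. \<forall>x\<in>Z. cmod (f x) \<le> B)"
  unfolding blip_fun_def lip_fun_def bounded_iff by auto

lemma blip_diff:
  assumes "blip_fun Z f" "blip_fun Z g"
  shows "blip_fun Z (\<lambda>x. 1 * f x + (-1) * g x)"
proof -
  obtain C1 B1 C2 B2 where "C1-lipschitz_on Z f" "\<forall>x\<in>Z. cmod (f x) \<le> B1"
    "C2-lipschitz_on Z g" "\<forall>x\<in>Z. cmod (g x) \<le> B2" using assms unfolding blip_iff by blast
  moreover have "\<forall>x\<in>Z. cmod (f x - g x) \<le> B1 + B2"
    using calculation by (smt (verit) norm_triangle_ineq4)
  ultimately show ?thesis unfolding blip_iff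
    by (auto intro: lipschitz_on_diff)
qed

lemma mc_lin:
  fixes T :: "('a::metric_space \<Rightarrow> complex) \<Rightarrow> ('a \<Rightarrow> complex) list \<Rightarrow> complex"
  assumes "metric_current k T"
  shows "\<forall>f g \<pi> a b. dom_ok UNIV k f \<pi> \<longrightarrow> blip_fun UNIV g \<longrightarrow>
        T (\<lambda>x. a * f x + b * g x) \<pi> = a * T f \<pi> + b * T g \<pi>"
  using assms unfolding metric_current_def apply (elim conjE) apply assumption done

lemma mc_mlin:
  fixes T :: "('a::metric_space \<Rightarrow> complex) \<Rightarrow> ('a \<Rightarrow> complex) list \<Rightarrow> complex"
  assumes "metric_current k T"
  shows "\<forall>f \<pi> j g h a b. dom_ok UNIV k f \<pi> \<longrightarrow> j < k \<longrightarrow> lip_fun UNIV g \<longrightarrow> lip_fun UNIV h \<longrightarrow>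
        T f (\<pi>[j := (\<lambda>x. a * g x + b * h x)]) = a * T f (\<pi>[j := g]) + b * T f (\<pi>[j := h])"
  using assms unfolding metric_current_def apply (elim conjE) apply assumption done

lemma mc_cont:
  fixes T :: "('a::metric_space \<Rightarrow> complex) \<Rightarrow> ('a \<Rightarrow> complex) list \<Rightarrow> complex"
  assumes "metric_current k T"
  shows "\<forall>f \<pi> \<pi>s. dom_ok UNIV k f \<pi> \<longrightarrow> (\<forall>i. dom_ok UNIV k f (\<pi>s i)) \<longrightarrow>
        (\<forall>j<k. \<forall>x. (\<lambda>i. (\<pi>s i ! j) x) \<longlonglongrightarrow> (\<pi> ! j) x) \<longrightarrow>
        (\<exists>C. \<forall>i. \<forall>j<k. C-lipschitz_on UNIV (\<pi>s i ! j)) \<longrightarrow>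
        (\<lambda>i. T f (\<pi>s i)) \<longlonglongrightarrow> T f \<pi>"
  using assms unfolding metric_current_def apply (elim conjE) apply assumption done

lemma mc_loc:
  fixes T :: "('a::metric_space \<Rightarrow> complex) \<Rightarrow> ('a \<Rightarrow> complex) list \<Rightarrow> complex"
  assumes "metric_current k T"
  shows "\<forall>f \<pi>. dom_ok UNIV k f \<pi> \<longrightarrow>
        (\<exists>j<k. \<exists>U. open U \<and> supp_in UNIV f \<subseteq> U \<and> (\<exists>c. \<forall>x\<in>U. (\<pi> ! j) x = c)) \<longrightarrow>
        T f \<pi> = 0"
  using assms unfolding metric_current_def apply (elim conjE) apply assumption done

lemma mc_mass:
  fixes T :: "('a::metric_space \<Rightarrow> complex) \<Rightarrow> ('a \<Rightarrow> complex) list \<Rightarrow> complex"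
  assumes "metric_current k T"
  shows "\<exists>\<mu>. finite_radon_measure \<mu> \<and>
       (\<forall>f \<pi>. dom_ok UNIV k f \<pi> \<longrightarrow>
          cmod (T f \<pi>) \<le> (\<Prod>j<k. Lip UNIV (\<pi> ! j)) * (\<integral>x. cmod (f x) \<partial>\<mu>))"
  using assms unfolding metric_current_def apply (elim conjE) apply assumption done

lemma mass_diff:
  fixes T :: "('a::metric_space \<Rightarrow> complex) \<Rightarrow> ('a \<Rightarrow> complex) list \<Rightarrow> complex"
    and \<mu> :: "'a measure" and f g :: "'a \<Rightarrow> complex"
  assumes mc: "metric_current k T"
    and ms: "\<forall>f \<pi>. dom_ok UNIV k f \<pi> \<longrightarrow>
          cmod (T f \<pi>) \<le> (\<Prod>j<k. Lip UNIV (\<pi> ! j)) * (\<integral>x. cmod (f x) \<partial>\<mu>)"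
    and d: "dom_ok UNIV k f \<sigma>" and b: "blip_fun UNIV g"
    and L: "\<forall>j<k. C-lipschitz_on UNIV (\<sigma>!j)"
  shows "cmod (T f \<sigma> - T g \<sigma>) \<le> C^k * (\<integral>x. cmod (f x - g x) \<partial>\<mu>)"
proof -
  note lin = mc_lin[OF mc, rule_format]
  have "T (\<lambda>x. 1 * f x + (-1) * g x) \<sigma> = T f \<sigma> - T g \<sigma>" using lin[OF d b, of 1 "-1"] by simp
  moreover have d2: "dom_ok UNIV k (\<lambda>x. 1 * f x + (-1) * g x) \<sigma>"
    using d b blip_diff unfolding dom_ok_def by blast
  ultimately have "cmod (T f \<sigma> - T g \<sigma>) \<le> (\<Prod>j<k. Lip UNIV (\<sigma> ! j)) * (\<integral>x. cmod (f x - g x) \<partial>\<mu>)"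
    using ms[rule_format, OF d2] by simp
  also have "\<dots> \<le> C^k * (\<integral>x. cmod (f x - g x) \<partial>\<mu>)"
    by (rule mult_right_mono[OF prod_Lip_le[OF L]]) simp
  finally show ?thesis .
qed


lemma lip_fun_diff: "lip_fun Z f \<Longrightarrow> lip_fun Z g \<Longrightarrow> lip_fun Z (\<lambda>x. 1 * f x + (-1) * g x)"
  unfolding lip_fun_def by (auto intro: lipschitz_on_diff)

lemma take_drop_upd:
  assumes "n < length \<sigma>" "length \<tau> = length \<sigma>"
  shows "(take n \<tau> @ drop n \<sigma>)[n := \<tau>!n] = take (Suc n) \<tau> @ drop (Suc n) \<sigma>"
proof (rule nth_equalityI)
  show "length ((take n \<tau> @ drop n \<sigma>)[n := \<tau>!n]) = length (take (Suc n) \<tau> @ drop (Suc n) \<sigma>)"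
    using assms by simp
  fix i assume "i < length ((take n \<tau> @ drop n \<sigma>)[n := \<tau>!n])"
  then have i: "i < length \<sigma>" using assms by simp
  show "(take n \<tau> @ drop n \<sigma>)[n := \<tau>!n] ! i = (take (Suc n) \<tau> @ drop (Suc n) \<sigma>) ! i"
    using assms i by (cases "i < n"; cases "i = n") (auto simp: nth_append nth_list_update)
qed
lemma take_drop_nth:
  assumes "n < length \<sigma>" "length \<tau> = length \<sigma>"
  shows "(take n \<tau> @ drop n \<sigma>)!n = \<sigma>!n"
  using assms by (simp add: nth_append)

lemma loc_replace:
  fixes T :: "('a::metric_space \<Rightarrow> complex) \<Rightarrow> ('a \<Rightarrow> complex) list \<Rightarrow> complex"
  assumes mc: "metric_current k T"
    and d: "dom_ok UNIV k g \<sigma>" and lt: "length \<tau> = k" and lipt: "\<forall>h\<in>set \<tau>. lip_fun UNIV h"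
    and W: "open W" "supp_in UNIV g \<subseteq> W"
    and eq: "\<forall>j<k. \<forall>x\<in>W. (\<sigma>!j) x = (\<tau>!j) x"
  shows "T g \<sigma> = T g \<tau>"
proof -
  have ls: "length \<sigma> = k" using d unfolding dom_ok_def by simp
  have lips: "\<forall>h\<in>set \<sigma>. lip_fun UNIV h" using d unfolding dom_ok_def by simp
  have "n \<le> k \<Longrightarrow> T g (take n \<tau> @ drop n \<sigma>) = T g \<sigma>" for n
  proof (induction n)
    case 0 then show ?case by simp
  next
    case (Suc n)
    let ?\<rho> = "take n \<tau> @ drop n \<sigma>"
    have nk: "n < k" using Suc by simp
    have lr: "length ?\<rho> = k" using ls lt nk by simp
    have lipr: "\<forall>h\<in>set ?\<rho>. lip_fun UNIV h" using lips lipt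
      by (auto dest: in_set_takeD in_set_dropD)
    have dr: "dom_ok UNIV k g ?\<rho>" using d lr lipr unfolding dom_ok_def by simp
    have lt': "lip_fun UNIV (\<tau>!n)" "lip_fun UNIV (\<sigma>!n)" using lipt lips nk lt ls by auto
    have e1: "?\<rho>[n := \<tau>!n] = take (Suc n) \<tau> @ drop (Suc n) \<sigma>"
      using take_drop_upd[of n \<sigma> \<tau>] nk ls lt by simp
    have e2: "?\<rho>[n := \<sigma>!n] = ?\<rho>"
      using take_drop_nth[of n \<sigma> \<tau>] nk ls lt by (metis list_update_id)
    have lin: "T g (?\<rho>[n := (\<lambda>x. 1 * (\<tau>!n) x + (-1) * (\<sigma>!n) x)]) =
        1 * T g (?\<rho>[n := \<tau>!n]) + (-1) * T g (?\<rho>[n := \<sigma>!n])"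
      using mc_mlin[OF mc, rule_format, OF dr nk lt', of 1 "-1"] by simp
    have sub: "set (?\<rho>[n := (\<lambda>x. 1 * (\<tau>!n) x + (-1) * (\<sigma>!n) x)]) \<subseteq>
        insert (\<lambda>x. 1 * (\<tau>!n) x + (-1) * (\<sigma>!n) x) (set ?\<rho>)"
      by (rule set_update_subset_insert)
    have dr2: "dom_ok UNIV k g (?\<rho>[n := (\<lambda>x. 1 * (\<tau>!n) x + (-1) * (\<sigma>!n) x)])"
    proof -
      have "\<forall>h\<in>set (?\<rho>[n := (\<lambda>x. 1 * (\<tau>!n) x + (-1) * (\<sigma>!n) x)]). lip_fun UNIV h"
        using sub lip_fun_diff[OF lt'] lipr by blast
      then show ?thesis using dr lr unfolding dom_ok_def by simp
    qed
    have ev: "(?\<rho>[n := (\<lambda>x. 1 * (\<tau>!n) x + (-1) * (\<sigma>!n) x)] ! n) x = 0" if "x \<in> W" for x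
      using lr nk eq that by simp
    have "T g (?\<rho>[n := (\<lambda>x. 1 * (\<tau>!n) x + (-1) * (\<sigma>!n) x)]) = 0"
    proof (rule mc_loc[OF mc, rule_format, OF dr2])
      have "open W \<and> supp_in UNIV g \<subseteq> W \<and> (\<forall>x\<in>W. (?\<rho>[n := (\<lambda>x. 1 * (\<tau>!n) x + (-1) * (\<sigma>!n) x)] ! n) x = 0)"
        using W ev by blast
      then show "\<exists>j<k. \<exists>U. open U \<and> supp_in UNIV g \<subseteq> U \<and>
          (\<exists>c. \<forall>x\<in>U. (?\<rho>[n := (\<lambda>x. 1 * (\<tau>!n) x + (-1) * (\<sigma>!n) x)] ! j) x = c)"
        using nk by blast
    qed
    then have "T g (take (Suc n) \<tau> @ drop (Suc n) \<sigma>) = T g ?\<rho>"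
      using lin e1 e2 by simp
    then show ?case using Suc by simp
  qed
  from this[of k] show ?thesis using ls lt by simp
qed


lemma frm_sets: "finite_radon_measure \<mu> \<Longrightarrow> sets \<mu> = sets borel"
  unfolding finite_radon_measure_def by (elim conjE)

lemma frm_fin: "finite_radon_measure \<mu> \<Longrightarrow> emeasure \<mu> (space \<mu>) < \<infinity>"
  unfolding finite_radon_measure_def by (elim conjE)

lemma frm_reg: "finite_radon_measure \<mu> \<Longrightarrow> A \<in> sets borel \<Longrightarrow>
    emeasure \<mu> A = (SUP K\<in>{K. compact K \<and> K \<subseteq> A}. emeasure \<mu> K)"
  unfolding finite_radon_measure_def by (elim conjE) blast

lemma frm_space: assumes "finite_radon_measure \<mu>" shows "space \<mu> = UNIV"
  using sets_eq_imp_space_eq[OF frm_sets[OF assms]] by simp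

lemma frm_finite: assumes "finite_radon_measure \<mu>" shows "finite_measure \<mu>"
proof -
  have "emeasure \<mu> (space \<mu>) \<noteq> \<infinity>" using frm_fin[OF assms] by simp
  then show ?thesis by (rule finite_measureI)
qed

lemma frm_meas:
  fixes g :: "'a::metric_space \<Rightarrow> 'b::metric_space"
  assumes "finite_radon_measure \<mu>" "continuous_on UNIV g"
  shows "g \<in> borel_measurable \<mu>"
proof -
  have "g \<in> borel_measurable borel" using assms(2) by (rule borel_measurable_continuous_onI)
  moreover have "sets \<mu> = sets borel" using assms(1) by (rule frm_sets)
  ultimately show ?thesis using measurable_cong_sets[of \<mu> borel borel borel] by simp
qed

lemma frm_compact:
  fixes \<mu> :: "'a::metric_space measure"
  assumes fr: "finite_radon_measure \<mu>" and e: "\<epsilon> > 0"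
  shows "\<exists>K. compact K \<and> measure \<mu> (- K) < \<epsilon>"
proof -
  interpret finite_measure \<mu> using frm_finite[OF fr] .
  have sp: "space \<mu> = UNIV" using frm_space[OF fr] .
  have sb: "sets \<mu> = sets borel" using fr by (rule frm_sets)
  have reg: "emeasure \<mu> UNIV = (SUP K\<in>{K. compact K \<and> K \<subseteq> UNIV}. emeasure \<mu> K)"
    using frm_reg[OF fr, of UNIV] by simp
  show ?thesis
  proof (cases "measure \<mu> UNIV < \<epsilon>")
    case True
    then show ?thesis by (intro exI[of _ "{}"]) simp
  next
    case False
    have "ennreal (measure \<mu> UNIV - \<epsilon>) < ennreal (measure \<mu> UNIV)"
      using False e by (subst ennreal_less_iff) auto
    also have "\<dots> = emeasure \<mu> UNIV" using emeasure_eq_measure sp by (metis)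
    finally obtain K where K: "compact K" "ennreal (measure \<mu> UNIV - \<epsilon>) < emeasure \<mu> K"
      using reg by (auto simp: less_SUP_iff)
    have Ks: "K \<in> sets \<mu>" using K(1) sb compact_imp_closed borel_closed by (metis)
    have "measure \<mu> UNIV - \<epsilon> < measure \<mu> K"
      using K(2) False e by (simp add: emeasure_eq_measure ennreal_less_iff)
    moreover have "measure \<mu> (- K) = measure \<mu> UNIV - measure \<mu> K"
      using finite_measure_compl[OF Ks] sp by (simp add: Compl_eq_Diff_UNIV)
    ultimately show ?thesis using K(1) by (intro exI[of _ K]) auto
  qed
qed

lemma frm_int_bound:
  fixes g :: "'a::metric_space \<Rightarrow> complex"
  assumes fr: "finite_radon_measure \<mu>" and cg: "continuous_on UNIV g"
    and K: "compact K" and c: "0 \<le> c1" "0 \<le> c2"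
    and b: "\<And>x. cmod (g x) \<le> c1 + c2 * indicator (- K) x"
  shows "(\<integral>x. cmod (g x) \<partial>\<mu>) \<le> c1 * measure \<mu> UNIV + c2 * measure \<mu> (- K)"
proof -
  interpret finite_measure \<mu> using frm_finite[OF fr] .
  have sp: "space \<mu> = UNIV" using frm_space[OF fr] .
  have sb: "sets \<mu> = sets borel" using fr by (rule frm_sets)
  have Ks: "- K \<in> sets \<mu>" using K sb compact_imp_closed borel_closed
    by (metis borel_comp)
  have m: "(\<lambda>x. cmod (g x)) \<in> borel_measurable \<mu>"
    using frm_meas[OF fr cg] by measurable
  have iK: "integrable \<mu> (indicator (- K) :: 'a \<Rightarrow> real)"
    using Ks by (intro integrable_real_indicator) (simp_all add: emeasure_eq_measure)
  have i2: "integrable \<mu> (\<lambda>x. c1 + c2 * indicator (- K) x :: real)"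
    using iK by (intro Bochner_Integration.integrable_add integrable_mult_right) auto
  have bb: "norm (cmod (g x)) \<le> c1 + c2" for x
  proof -
    have "c2 * indicator (- K) x \<le> c2" using c by (simp add: indicator_def)
    then show ?thesis using b[of x] by simp
  qed
  have i1: "integrable \<mu> (\<lambda>x. cmod (g x))"
    using bb m by (intro integrable_const_bound[where B="c1 + c2"]) auto
  have "(\<integral>x. cmod (g x) \<partial>\<mu>) \<le> (\<integral>x. c1 + c2 * indicator (- K) x \<partial>\<mu>)"
    using i1 i2 b by (intro integral_mono) auto
  also have "\<dots> = c1 * measure \<mu> UNIV + c2 * measure \<mu> (- K)"
  proof -
    have "(\<integral>x. c1 + c2 * indicator (- K) x \<partial>\<mu>) = (\<integral>x. c1 \<partial>\<mu>) + (\<integral>x. c2 * indicator (- K) x \<partial>\<mu>)"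
      using iK by (intro Bochner_Integration.integral_add) auto
    also have "(\<integral>x. c2 * indicator (- K) x \<partial>\<mu>) = c2 * (\<integral>x. indicator (- K) x \<partial>\<mu>)"
      by (rule integral_mult_right_zero)
    also have "(\<integral>x. indicator (- K) x \<partial>\<mu>) = measure \<mu> (- K)"
      using Ks by simp
    also have "(\<integral>x. c1 \<partial>\<mu>) = c1 * measure \<mu> UNIV"
      using sp by simp
    finally show ?thesis .
  qed
  finally show ?thesis .
qed


lemma infdist_lessE:
  fixes K :: "'a::metric_space set"
  assumes "K \<noteq> {}" "infdist x K < d"
  obtains z where "z \<in> K" "dist x z < d"
proof -
  have "(INF a\<in>K. dist x a) < d" using assms infdist_notempty by metis
  then have "\<exists>z\<in>K. dist x z < d"
    using assms(1) by (subst (asm) cINF_less_iff) (auto intro: bdd_belowI[where m=0])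
  then show ?thesis using that by blast
qed

lemma proj_err:
  fixes p :: "'a::real_normed_vector \<Rightarrow> 'a"
  assumes "bounded_linear p" "onorm p \<le> a"
  shows "norm (p y - y) \<le> (a + 1) * norm y"
proof -
  have "norm (p y) \<le> onorm p * norm y" using onorm[OF assms(1)] .
  also have "\<dots> \<le> a * norm y" using assms(2) by (simp add: mult_right_mono)
  finally have "norm (p y) \<le> a * norm y" .
  then show ?thesis using norm_triangle_ineq4[of "p y" y] by (simp add: algebra_simps)
qed

lemma clamp_lip: "\<bar>max 0 (min 1 u) - max 0 (min 1 v)\<bar> \<le> \<bar>u - v\<bar>" for u v :: real
  by (simp add: max_def min_def abs_if)

lemma clamp0_lip: "\<bar>max 0 u - max 0 v\<bar> \<le> \<bar>u - v\<bar>" for u v :: real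
  by (simp add: max_def abs_if)

definition cutphi :: "'a::metric_space set \<Rightarrow> real \<Rightarrow> 'a \<Rightarrow> real" where
  "cutphi K \<delta> x = max 0 (min 1 (2 - infdist x K / \<delta>))"

definition cutpsi :: "'a::metric_space set \<Rightarrow> real \<Rightarrow> 'a \<Rightarrow> real" where
  "cutpsi K \<delta> x = max 0 (1 - 4 * infdist x K / \<delta>)"

lemma cutphi_range: "0 \<le> cutphi K \<delta> x" "cutphi K \<delta> x \<le> 1"
  unfolding cutphi_def by auto

lemma cutphi_one: "\<delta> > 0 \<Longrightarrow> infdist x K \<le> \<delta> \<Longrightarrow> cutphi K \<delta> x = 1"
  unfolding cutphi_def by (simp add: field_simps)

lemma cutphi_nz: "\<delta> > 0 \<Longrightarrow> cutphi K \<delta> x \<noteq> 0 \<Longrightarrow> infdist x K < 2 * \<delta>"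
  unfolding cutphi_def by (auto simp: field_simps max_def min_def split: if_splits)

lemma cutphi_lip: assumes "\<delta> > 0" shows "\<bar>cutphi K \<delta> x - cutphi K \<delta> y\<bar> \<le> dist x y / \<delta>"
proof -
  have "\<bar>cutphi K \<delta> x - cutphi K \<delta> y\<bar> \<le> \<bar>(2 - infdist x K / \<delta>) - (2 - infdist y K / \<delta>)\<bar>"
    unfolding cutphi_def by (rule clamp_lip)
  also have "\<dots> = \<bar>(infdist y K - infdist x K) / \<delta>\<bar>" by (simp add: diff_divide_distrib)
  also have "\<dots> = \<bar>infdist x K - infdist y K\<bar> / \<delta>" using assms by (simp add: abs_minus_commute)
  also have "\<dots> \<le> dist x y / \<delta>" using divide_right_mono[OF infdist_triangle_abs[of x K y]] assms by simp
  finally show ?thesis .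
qed

lemma cutpsi_range: "0 \<le> cutpsi K \<delta> x" "\<delta> > 0 \<Longrightarrow> cutpsi K \<delta> x \<le> 1"
  unfolding cutpsi_def by (auto simp: infdist_nonneg)

lemma cutpsi_K: "x \<in> K \<Longrightarrow> cutpsi K \<delta> x = 1"
  unfolding cutpsi_def by simp

lemma cutpsi_nz: "\<delta> > 0 \<Longrightarrow> cutpsi K \<delta> x \<noteq> 0 \<Longrightarrow> infdist x K < \<delta> / 4"
  unfolding cutpsi_def by (auto simp: field_simps max_def split: if_splits)

lemma cutpsi_lip: assumes "\<delta> > 0" shows "\<bar>cutpsi K \<delta> x - cutpsi K \<delta> y\<bar> \<le> (4 / \<delta>) * dist x y"
proof -
  have "\<bar>cutpsi K \<delta> x - cutpsi K \<delta> y\<bar> \<le> \<bar>(1 - 4 * infdist x K / \<delta>) - (1 - 4 * infdist y K / \<delta>)\<bar>"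
    unfolding cutpsi_def by (rule clamp0_lip)
  also have "\<dots> = \<bar>(4 / \<delta>) * (infdist y K - infdist x K)\<bar>" by (simp add: algebra_simps)
  also have "\<dots> = (4 / \<delta>) * \<bar>infdist x K - infdist y K\<bar>" using assms by (subst abs_mult) (simp add: abs_minus_commute)
  also have "\<dots> \<le> (4 / \<delta>) * dist x y" using assms by (intro mult_left_mono infdist_triangle_abs) auto
  finally show ?thesis .
qed

definition rmap :: "'a::real_normed_vector set \<Rightarrow> real \<Rightarrow> ('a \<Rightarrow> 'a) \<Rightarrow> 'a \<Rightarrow> 'a" where
  "rmap K \<delta> p x = x + cutphi K \<delta> x *\<^sub>R (p x - x)"

locale rsetup =
  fixes K :: "'a::real_normed_vector set" and p :: "'a \<Rightarrow> 'a" and a e \<delta> :: real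
  assumes bl: "bounded_linear p" and on: "onorm p \<le> a" and a: "0 \<le> a"
    and Kne: "K \<noteq> {}" and Ke: "\<forall>z\<in>K. norm (p z - z) \<le> e"
    and e: "0 \<le> e" "e \<le> \<delta>" and d: "\<delta> > 0"
begin

lemma u_bound: assumes "infdist y K < 2 * \<delta>" shows "norm (p y - y) \<le> 2 * (a + 1) * \<delta> + e"
proof -
  obtain z where z: "z \<in> K" "dist y z < 2 * \<delta>" using infdist_lessE[OF Kne assms] by blast
  have "p y - y = (p (y - z) - (y - z)) + (p z - z)"
    using linear_diff[OF bounded_linear.linear[OF bl], of y z] by (simp add: algebra_simps)
  then have "norm (p y - y) \<le> norm (p (y - z) - (y - z)) + norm (p z - z)"
    by (metis norm_triangle_ineq)
  also have "\<dots> \<le> (a + 1) * norm (y - z) + e" using proj_err[OF bl on] Ke z by (simp add: add_mono)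
  also have "\<dots> \<le> (a + 1) * (2 * \<delta>) + e" using z a by (simp add: dist_norm mult_left_mono)
  finally show ?thesis by (simp add: algebra_simps)
qed

lemma u_lip: "norm ((p x - x) - (p y - y)) \<le> (a + 1) * dist x y"
proof -
  have "(p x - x) - (p y - y) = p (x - y) - (x - y)"
    using linear_diff[OF bounded_linear.linear[OF bl], of x y] by (simp add: algebra_simps)
  then show ?thesis using proj_err[OF bl on, of "x - y"] by (metis dist_norm)
qed

lemma prod_est:
  assumes "cutphi K \<delta> y \<noteq> 0"
  shows "norm (cutphi K \<delta> x *\<^sub>R (p x - x) - cutphi K \<delta> y *\<^sub>R (p y - y)) \<le> (3 * (a + 1) + 1) * dist x y"
proof -
  let ?f = "cutphi K \<delta>"
  have "?f x *\<^sub>R (p x - x) - ?f y *\<^sub>R (p y - y) = ?f x *\<^sub>R ((p x - x) - (p y - y)) + (?f x - ?f y) *\<^sub>R (p y - y)"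
    by (simp add: algebra_simps)
  then have "norm (?f x *\<^sub>R (p x - x) - ?f y *\<^sub>R (p y - y)) \<le> \<bar>?f x\<bar> * norm ((p x - x) - (p y - y)) + \<bar>?f x - ?f y\<bar> * norm (p y - y)"
    using norm_triangle_ineq[of "?f x *\<^sub>R ((p x - x) - (p y - y))" "(?f x - ?f y) *\<^sub>R (p y - y)"]
    by (simp only: norm_scaleR)
  also have "\<dots> \<le> 1 * ((a + 1) * dist x y) + (dist x y / \<delta>) * (2 * (a + 1) * \<delta> + e)"
  proof (rule add_mono)
    show "\<bar>?f x\<bar> * norm ((p x - x) - (p y - y)) \<le> 1 * ((a + 1) * dist x y)"
      using cutphi_range[of K \<delta> x] u_lip[of x y] by (intro mult_mono) auto
    show "\<bar>?f x - ?f y\<bar> * norm (p y - y) \<le> (dist x y / \<delta>) * (2 * (a + 1) * \<delta> + e)"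
      using cutphi_lip[OF d] u_bound[OF cutphi_nz[OF d assms]] d
      by (intro mult_mono) auto
  qed
  also have "\<dots> = (a + 1) * dist x y + dist x y * (2 * (a + 1)) + dist x y * (e / \<delta>)"
    using d by (simp add: field_simps)
  also have "\<dots> \<le> (a + 1) * dist x y + dist x y * (2 * (a + 1)) + dist x y * 1"
    using e d by (intro add_left_mono mult_left_mono) auto
  also have "\<dots> = (3 * (a + 1) + 1) * dist x y" by (simp add: algebra_simps)
  finally show ?thesis .
qed

lemma r_lip: "(3 * (a + 1) + 2)-lipschitz_on UNIV (rmap K \<delta> p)"
proof (rule lipschitz_onI)
  show "0 \<le> 3 * (a + 1) + 2" using a by simp
  fix x y :: 'a
  let ?f = "cutphi K \<delta>"
  have m: "norm (?f x *\<^sub>R (p x - x) - ?f y *\<^sub>R (p y - y)) \<le> (3 * (a + 1) + 1) * dist x y"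
  proof (cases "?f y = 0")
    case False then show ?thesis by (rule prod_est)
  next
    case True
    show ?thesis
    proof (cases "?f x = 0")
      case True
      then show ?thesis using \<open>?f y = 0\<close> a by simp
    next
      case False
      have "norm (?f y *\<^sub>R (p y - y) - ?f x *\<^sub>R (p x - x)) \<le> (3 * (a + 1) + 1) * dist y x"
        using False by (rule prod_est)
      then show ?thesis by (simp add: norm_minus_commute dist_commute)
    qed
  qed
  have "rmap K \<delta> p x - rmap K \<delta> p y = (x - y) + (?f x *\<^sub>R (p x - x) - ?f y *\<^sub>R (p y - y))"
    unfolding rmap_def by (simp add: algebra_simps)
  then have "dist (rmap K \<delta> p x) (rmap K \<delta> p y) = norm ((x - y) + (?f x *\<^sub>R (p x - x) - ?f y *\<^sub>R (p y - y)))"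
    by (simp add: dist_norm)
  also have "\<dots> \<le> norm (x - y) + norm (?f x *\<^sub>R (p x - x) - ?f y *\<^sub>R (p y - y))"
    by (rule norm_triangle_ineq)
  also have "\<dots> \<le> dist x y + (3 * (a + 1) + 1) * dist x y"
    using m by (simp add: dist_norm)
  finally have "dist (rmap K \<delta> p x) (rmap K \<delta> p y) \<le> dist x y + (3 * (a + 1) + 1) * dist x y" .
  then show "dist (rmap K \<delta> p x) (rmap K \<delta> p y) \<le> (3 * (a + 1) + 2) * dist x y"
    by (simp add: algebra_simps)
qed

lemma r_close: "norm (rmap K \<delta> p x - x) \<le> 2 * (a + 1) * \<delta> + e"
proof (cases "cutphi K \<delta> x = 0")
  case True then show ?thesis using a d e by (simp add: rmap_def)
next
  case False
  have "norm (rmap K \<delta> p x - x) = cutphi K \<delta> x * norm (p x - x)"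
    using cutphi_range[of K \<delta> x] by (simp add: rmap_def)
  also have "\<dots> \<le> 1 * (2 * (a + 1) * \<delta> + e)"
    using cutphi_range[of K \<delta> x] u_bound[OF cutphi_nz[OF d False]] by (intro mult_mono) auto
  finally show ?thesis by simp
qed

lemma r_eq: "infdist x K \<le> \<delta> \<Longrightarrow> rmap K \<delta> p x = p x"
  using cutphi_one[OF d, of x K] by (simp add: rmap_def)

end


lemma directed_finite:
  assumes "finite F" "F \<subseteq> \<Union>\<E>" "\<E> \<noteq> {}"
    and dir: "\<forall>V\<in>\<E>. \<forall>W\<in>\<E>. \<exists>U\<in>\<E>. V \<subseteq> U \<and> W \<subseteq> U"
  shows "\<exists>V\<in>\<E>. F \<subseteq> V"
  using assms(1,2)
proof (induction F rule: finite_induct)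
  case empty then show ?case using assms(3) by blast
next
  case (insert c F)
  then obtain V where V: "V \<in> \<E>" "F \<subseteq> V" by blast
  obtain W where W: "W \<in> \<E>" "c \<in> W" using insert by blast
  obtain U where "U \<in> \<E>" "V \<subseteq> U" "W \<subseteq> U" using dir V W by blast
  then show ?case using V W by blast
qed

lemma approx_compact:
  fixes K :: "'a::real_normed_vector set" and p :: "'a set \<Rightarrow> 'a \<Rightarrow> 'a"
  assumes K: "compact K" and eta: "\<eta> > 0"
    and ne: "\<E> \<noteq> {}" and dir: "\<forall>V\<in>\<E>. \<forall>W\<in>\<E>. \<exists>U\<in>\<E>. V \<subseteq> U \<and> W \<subseteq> U"
    and cl: "closure (\<Union>\<E>) = UNIV"
    and pr: "\<forall>V\<in>\<E>. bounded_linear (p V) \<and> (\<forall>v\<in>V. p V v = v) \<and> onorm (p V) \<le> a"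
    and a: "0 \<le> a"
  shows "\<exists>V\<in>\<E>. \<forall>x\<in>K. norm (p V x - x) \<le> \<eta>"
proof -
  define r where "r = \<eta> / (a + 1)"
  have r: "r > 0" using eta a by (simp add: r_def)
  have cov: "K \<subseteq> (\<Union>c\<in>\<Union>\<E>. ball c r)"
  proof
    fix x assume "x \<in> K"
    have "x \<in> closure (\<Union>\<E>)" using cl by simp
    then obtain c where "c \<in> \<Union>\<E>" "dist c x < r" using closure_approachable r by metis
    then show "x \<in> (\<Union>c\<in>\<Union>\<E>. ball c r)" by auto
  qed
  obtain C' where C': "C' \<subseteq> \<Union>\<E>" "finite C'" "K \<subseteq> (\<Union>c\<in>C'. ball c r)"
    using compactE_image[OF K _ cov] by blast
  obtain V where V: "V \<in> \<E>" "C' \<subseteq> V" using directed_finite[OF C'(2) C'(1) ne dir] by blast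
  have "norm (p V x - x) \<le> \<eta>" if xK: "x \<in> K" for x
  proof -
    obtain c where c: "c \<in> C'" "dist c x < r" using C'(3) xK by (auto simp: dist_commute)
    have pc: "p V c = c" using pr V c by blast
    have bl: "bounded_linear (p V)" "onorm (p V) \<le> a" using pr V by auto
    have "p V x - x = p V (x - c) - (x - c)"
      using pc linear_diff[OF bounded_linear.linear[OF bl(1)], of x c] by (simp add: algebra_simps)
    then have "norm (p V x - x) \<le> (a + 1) * norm (x - c)"
      using proj_err[OF bl, of "x - c"] by metis
    also have "\<dots> \<le> (a + 1) * r" using c a by (simp add: dist_norm norm_minus_commute)
    also have "\<dots> = \<eta>" using a by (simp add: r_def)
    finally show ?thesis .
  qed
  then show ?thesis using V by blast
qed


lemma holo_comp:
  fixes J :: "'a::real_normed_vector \<Rightarrow> 'a"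
  assumes h: "holo_on J V U g" and P: "clin_projection J V P"
  shows "holo_on J UNIV (P -` U) (g \<circ> P)"
  unfolding holo_on_def
proof
  fix x assume x: "x \<in> P -` U"
  have bl: "bounded_linear P" and PJ: "\<forall>x. P (J x) = J (P x)" and PV: "\<forall>x. P x \<in> V"
    using P unfolding clin_projection_def by auto
  obtain L where L: "(g has_derivative L) (at (P x) within V)" "\<forall>h\<in>V. L (J h) = \<i> * L h"
    using h x unfolding holo_on_def by auto
  have "(P has_derivative P) (at x within UNIV)" using bl by (rule bounded_linear_imp_has_derivative)
  moreover have "(g has_derivative L) (at (P x) within P ` UNIV)"
    by (rule has_derivative_subset[OF L(1)]) (use PV in auto)
  ultimately have "(g \<circ> P has_derivative L \<circ> P) (at x within UNIV)" by (rule diff_chain_within)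
  moreover have "\<forall>h\<in>UNIV. (L \<circ> P) (J h) = \<i> * (L \<circ> P) h"
    using L(2) PJ PV by simp
  ultimately show "\<exists>L. (g \<circ> P has_derivative L) (at x within UNIV) \<and> (\<forall>h\<in>UNIV. L (J h) = \<i> * L h)"
    by blast
qed

lemma lip_comp:
  assumes "C-lipschitz_on V g" "bounded_linear P" "\<forall>x. P x \<in> V"
  shows "lip_fun UNIV (g \<circ> P)"
proof -
  obtain B where B: "B-lipschitz_on UNIV P" using bounded_linear.lipschitz_boundE[OF assms(2)] by blast
  have "C-lipschitz_on (P ` UNIV) g" by (rule lipschitz_on_subset[OF assms(1)]) (use assms(3) in auto)
  then have "(C * B)-lipschitz_on UNIV (g \<circ> P)" using B by (intro lipschitz_on_compose)
  then show ?thesis unfolding lip_fun_def by blast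
qed

lemma forward:
  fixes J :: "'a::real_normed_vector \<Rightarrow> 'a"
    and T :: "('a \<Rightarrow> complex) \<Rightarrow> ('a \<Rightarrow> complex) list \<Rightarrow> complex"
  assumes bd: "bidimension J UNIV p q T" and P: "clin_projection J V P"
  shows "bidimension J V p q (pushforward P T)"
  unfolding bidimension_def
proof (intro allI impI)
  fix f \<pi> assume d: "dom_ok V (p + q) f \<pi>"
    and ex: "\<exists>U. openin (top_of_set V) U \<and> supp_in V f \<subseteq> U \<and>
          (p + 1 \<le> card {j. j < p + q \<and> holo_on J V U (\<pi> ! j)} \<or>
           q + 1 \<le> card {j. j < p + q \<and> holo_on J V U (\<lambda>x. cnj ((\<pi> ! j) x))})"
  have bl: "bounded_linear P" and PV: "\<forall>x. P x \<in> V"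
    using P unfolding clin_projection_def by auto
  obtain U where U: "openin (top_of_set V) U" "supp_in V f \<subseteq> U"
    and cd: "p + 1 \<le> card {j. j < p + q \<and> holo_on J V U (\<pi> ! j)} \<or>
           q + 1 \<le> card {j. j < p + q \<and> holo_on J V U (\<lambda>x. cnj ((\<pi> ! j) x))}"
    using ex by blast
  obtain T0 where T0: "open T0" "U = V \<inter> T0" using U(1) openin_open by metis
  define U' where "U' = P -` U"
  have U'eq: "U' = P -` T0" using T0 PV by (auto simp: U'_def)
  have oU': "open U'" unfolding U'eq using T0(1) linear_continuous_at[OF bl] by (rule continuous_open_vimage)
  define \<pi>' where "\<pi>' = map (\<lambda>g. g \<circ> P) \<pi>"
  have lp: "length \<pi> = p + q" using d unfolding dom_ok_def by simp
  have d': "dom_ok UNIV (p + q) (f \<circ> P) \<pi>'"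
  proof -
    have bf: "blip_fun V f" and lg: "\<forall>g\<in>set \<pi>. lip_fun V g" using d unfolding dom_ok_def by auto
    have "lip_fun UNIV (f \<circ> P)" using bf lip_comp[OF _ bl PV] unfolding blip_fun_def lip_fun_def by blast
    moreover have "bounded ((f \<circ> P) ` UNIV)"
      using bf unfolding blip_fun_def by (rule conjE) (erule bounded_subset, use PV in auto)
    moreover have "\<forall>g\<in>set \<pi>'. lip_fun UNIV g"
      using lg lip_comp[OF _ bl PV] unfolding \<pi>'_def lip_fun_def by auto
    ultimately show ?thesis using lp unfolding dom_ok_def blip_fun_def \<pi>'_def by simp
  qed
  have supp: "supp_in UNIV (f \<circ> P) \<subseteq> U'"
  proof -
    let ?S = "closure {y\<in>V. f y \<noteq> 0}"
    have "closed (P -` ?S)" using linear_continuous_at[OF bl] by (intro continuous_closed_vimage) auto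
    moreover have "{x\<in>UNIV. (f \<circ> P) x \<noteq> 0} \<subseteq> P -` ?S" using PV closure_subset by fastforce
    ultimately have "closure {x\<in>UNIV. (f \<circ> P) x \<noteq> 0} \<subseteq> P -` ?S" by (rule closure_minimal[rotated])
    then have "supp_in UNIV (f \<circ> P) \<subseteq> P -` (V \<inter> ?S)" using PV unfolding supp_in_def by auto
    also have "\<dots> \<subseteq> U'" using U(2) unfolding supp_in_def U'_def by auto
    finally show ?thesis .
  qed
  have nth': "\<pi>' ! j = (\<pi> ! j) \<circ> P" if "j < p + q" for j using that lp unfolding \<pi>'_def by simp
  have c1: "{j. j < p + q \<and> holo_on J V U (\<pi> ! j)} \<subseteq> {j. j < p + q \<and> holo_on J UNIV U' (\<pi>' ! j)}"
    using holo_comp[OF _ P] nth' unfolding U'_def by auto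
  have c2: "{j. j < p + q \<and> holo_on J V U (\<lambda>x. cnj ((\<pi> ! j) x))} \<subseteq>
      {j. j < p + q \<and> holo_on J UNIV U' (\<lambda>x. cnj ((\<pi>' ! j) x))}"
  proof
    fix j assume "j \<in> {j. j < p + q \<and> holo_on J V U (\<lambda>x. cnj ((\<pi> ! j) x))}"
    then have j: "j < p + q" "holo_on J V U (\<lambda>x. cnj ((\<pi> ! j) x))" by auto
    have "holo_on J UNIV U' ((\<lambda>x. cnj ((\<pi> ! j) x)) \<circ> P)" using holo_comp[OF j(2) P] unfolding U'_def .
    moreover have "(\<lambda>x. cnj ((\<pi>' ! j) x)) = (\<lambda>x. cnj ((\<pi> ! j) x)) \<circ> P" using nth'[OF j(1)] by auto
    ultimately show "j \<in> {j. j < p + q \<and> holo_on J UNIV U' (\<lambda>x. cnj ((\<pi>' ! j) x))}" using j by simp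
  qed
  have cm1: "card {j. j < p + q \<and> holo_on J V U (\<pi> ! j)} \<le> card {j. j < p + q \<and> holo_on J UNIV U' (\<pi>' ! j)}"
    by (rule card_mono[OF _ c1]) simp
  have cm2: "card {j. j < p + q \<and> holo_on J V U (\<lambda>x. cnj ((\<pi> ! j) x))} \<le>
      card {j. j < p + q \<and> holo_on J UNIV U' (\<lambda>x. cnj ((\<pi>' ! j) x))}"
    by (rule card_mono[OF _ c2]) simp
  have "T (f \<circ> P) \<pi>' = 0"
  proof (rule bd[unfolded bidimension_def, rule_format, OF d'])
    show "\<exists>U. openin (top_of_set UNIV) U \<and> supp_in UNIV (f \<circ> P) \<subseteq> U \<and>
          (p + 1 \<le> card {j. j < p + q \<and> holo_on J UNIV U (\<pi>' ! j)} \<or>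
           q + 1 \<le> card {j. j < p + q \<and> holo_on J UNIV U (\<lambda>x. cnj ((\<pi>' ! j) x))})"
      using oU' supp cd cm1 cm2 by (intro exI[of _ U']) auto
  qed
  then show "pushforward P T f \<pi> = 0" unfolding pushforward_def \<pi>'_def .
qed


lemma lip_mult_cut:
  fixes f :: "'a::metric_space \<Rightarrow> complex" and \<psi> :: "'a \<Rightarrow> real"
  assumes "Lf-lipschitz_on UNIV f" "\<forall>x. cmod (f x) \<le> B"
    and "\<And>x y. \<bar>\<psi> x - \<psi> y\<bar> \<le> L\<psi> * dist x y" "\<forall>x. \<bar>\<psi> x\<bar> \<le> 1" "0 \<le> L\<psi>"
  shows "(Lf + B * L\<psi>)-lipschitz_on UNIV (\<lambda>x. f x * complex_of_real (\<psi> x))"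
proof (rule lipschitz_onI)
  have B: "0 \<le> B" using assms(2) norm_ge_zero order_trans by blast
  show "0 \<le> Lf + B * L\<psi>" using lipschitz_on_nonneg[OF assms(1)] B assms(5) by simp
  fix x y :: 'a
  have "f x * complex_of_real (\<psi> x) - f y * complex_of_real (\<psi> y) =
      (f x - f y) * complex_of_real (\<psi> x) + f y * complex_of_real (\<psi> x - \<psi> y)"
    by (simp add: algebra_simps)
  then have "cmod (f x * complex_of_real (\<psi> x) - f y * complex_of_real (\<psi> y)) \<le>
      cmod (f x - f y) * \<bar>\<psi> x\<bar> + cmod (f y) * \<bar>\<psi> x - \<psi> y\<bar>"
    by (metis norm_triangle_ineq norm_mult norm_of_real)
  also have "\<dots> \<le> (Lf * dist x y) * 1 + B * (L\<psi> * dist x y)"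
    using assms lipschitz_onD[OF assms(1), of x y] B lipschitz_on_nonneg[OF assms(1)]
    by (intro add_mono mult_mono) (auto simp: dist_norm)
  finally show "dist (f x * complex_of_real (\<psi> x)) (f y * complex_of_real (\<psi> y)) \<le> (Lf + B * L\<psi>) * dist x y"
    by (simp add: dist_norm algebra_simps)
qed

lemma lip_cont: "C-lipschitz_on UNIV g \<Longrightarrow> continuous_on UNIV g"
  by (rule lipschitz_on_continuous_on)

lemma est_step:
  fixes T :: "('a::real_normed_vector \<Rightarrow> complex) \<Rightarrow> ('a \<Rightarrow> complex) list \<Rightarrow> complex"
    and \<mu> :: "'a measure" and f :: "'a \<Rightarrow> complex" and P :: "'a \<Rightarrow> 'a"
  assumes mc: "metric_current k T"
    and fr: "finite_radon_measure \<mu>"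
    and ms: "\<forall>f \<pi>. dom_ok UNIV k f \<pi> \<longrightarrow>
          cmod (T f \<pi>) \<le> (\<Prod>j<k. Lip UNIV (\<pi> ! j)) * (\<integral>x. cmod (f x) \<partial>\<mu>)"
    and dd: "dom_ok UNIV k f \<pi>"
    and Lp: "\<forall>j<k. Lp-lipschitz_on UNIV (\<pi>!j)" and Lp0: "0 \<le> Lp"
    and Lf: "Lf-lipschitz_on UNIV f" and B: "\<forall>x. cmod (f x) \<le> B"
    and rs: "rsetup K P a e \<delta>" and K: "compact K"
    and zero: "\<forall>g. blip_fun UNIV g \<longrightarrow> (\<forall>x. f x = 0 \<longrightarrow> g x = 0) \<longrightarrow>
        T (g \<circ> P) (map (\<lambda>h. h \<circ> P) \<pi>) = 0"
  shows "cmod (T f (map (\<lambda>h. h \<circ> rmap K \<delta> P) \<pi>)) \<le>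
     (Lp * (3 * (a + 1) + 2))^k * (B * measure \<mu> (- K)) +
     (Lp * a)^k * ((Lf + B * (4 / \<delta>)) * e * measure \<mu> UNIV + 2 * B * measure \<mu> (- K))"
proof -
  interpret rsetup K P a e \<delta> by (rule rs)
  have lpi: "length \<pi> = k" using dd unfolding dom_ok_def by simp
  have B0: "0 \<le> B" using B norm_ge_zero order_trans by blast
  have Lf0: "0 \<le> Lf" using Lf by (rule lipschitz_on_nonneg)
  define R where "R = 3 * (a + 1) + 2"
  define r where "r = rmap K \<delta> P"
  define \<psi> where "\<psi> = cutpsi K \<delta>"
  define g where "g = (\<lambda>x. f x * complex_of_real (\<psi> x))"
  define Lg where "Lg = Lf + B * (4 / \<delta>)"
  define \<sigma> where "\<sigma> = map (\<lambda>h. h \<circ> r) \<pi>"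
  define \<tau> where "\<tau> = map (\<lambda>h. h \<circ> P) \<pi>"
  have rl: "R-lipschitz_on UNIV r" using r_lip unfolding R_def r_def .
  have Pl: "a-lipschitz_on UNIV P"
  proof (rule lipschitz_onI)
    fix x y
    have "norm (P (x - y)) \<le> onorm P * norm (x - y)" by (rule onorm[OF bl])
    also have "\<dots> \<le> a * norm (x - y)" using on by (simp add: mult_right_mono)
    finally show "dist (P x) (P y) \<le> a * dist x y"
      using linear_diff[OF bounded_linear.linear[OF bl], of x y] by (simp add: dist_norm)
  qed (rule a)
  have \<sigma>l: "\<forall>j<k. (Lp * R)-lipschitz_on UNIV (\<sigma>!j)"
  proof (intro allI impI)
    fix j assume j: "j < k"
    have "Lp-lipschitz_on (r ` UNIV) (\<pi>!j)" using Lp j by (auto intro: lipschitz_on_subset)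
    then have "(Lp * R)-lipschitz_on UNIV ((\<pi>!j) \<circ> r)" using rl by (intro lipschitz_on_compose)
    then show "(Lp * R)-lipschitz_on UNIV (\<sigma>!j)" using j lpi unfolding \<sigma>_def by simp
  qed
  have \<tau>l: "\<forall>j<k. (Lp * a)-lipschitz_on UNIV (\<tau>!j)"
  proof (intro allI impI)
    fix j assume j: "j < k"
    have "Lp-lipschitz_on (P ` UNIV) (\<pi>!j)" using Lp j by (auto intro: lipschitz_on_subset)
    then have "(Lp * a)-lipschitz_on UNIV ((\<pi>!j) \<circ> P)" using Pl by (intro lipschitz_on_compose)
    then show "(Lp * a)-lipschitz_on UNIV (\<tau>!j)" using j lpi unfolding \<tau>_def by simp
  qed
  have gl: "Lg-lipschitz_on UNIV g"
    unfolding g_def Lg_def \<psi>_def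
    using cutpsi_lip[OF d] cutpsi_range[where K=K and \<delta>=\<delta>] d
    by (intro lip_mult_cut[OF Lf B]) auto
  have \<psi>1: "0 \<le> \<psi> x" "\<psi> x \<le> 1" for x using cutpsi_range[where K=K and \<delta>=\<delta> and x=x] d unfolding \<psi>_def by auto
  have gB: "cmod (g x) \<le> B" for x
  proof -
    have "cmod (g x) = cmod (f x) * \<psi> x" using \<psi>1[of x] unfolding g_def by (simp add: norm_mult)
    also have "\<dots> \<le> B * 1" using B \<psi>1[of x] B0 by (intro mult_mono) auto
    finally show ?thesis by simp
  qed
  have bg: "blip_fun UNIV g" unfolding blip_iff using gl gB by blast
  have ls: "length \<sigma> = k" "length \<tau> = k" using lpi unfolding \<sigma>_def \<tau>_def by auto
  have lipsets: "\<forall>h\<in>set \<sigma>. lip_fun UNIV h" "\<forall>h\<in>set \<tau>. lip_fun UNIV h"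
  proof -
    show "\<forall>h\<in>set \<sigma>. lip_fun UNIV h"
    proof
      fix h assume "h \<in> set \<sigma>"
      then obtain j where "j < k" "h = \<sigma>!j" using ls by (auto simp: in_set_conv_nth)
      then show "lip_fun UNIV h" using \<sigma>l unfolding lip_fun_def by blast
    qed
    show "\<forall>h\<in>set \<tau>. lip_fun UNIV h"
    proof
      fix h assume "h \<in> set \<tau>"
      then obtain j where "j < k" "h = \<tau>!j" using ls by (auto simp: in_set_conv_nth)
      then show "lip_fun UNIV h" using \<tau>l unfolding lip_fun_def by blast
    qed
  qed
  have d\<sigma>: "dom_ok UNIV k f \<sigma>" using dd lipsets lpi unfolding dom_ok_def \<sigma>_def by simp
  have dg\<sigma>: "dom_ok UNIV k g \<sigma>" using bg lipsets lpi unfolding dom_ok_def \<sigma>_def by simp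
  have dg\<tau>: "dom_ok UNIV k g \<tau>" using bg lipsets lpi unfolding dom_ok_def \<tau>_def by simp
  have bgP: "blip_fun UNIV (g \<circ> P)"
  proof -
    have "(Lg * a)-lipschitz_on UNIV (g \<circ> P)"
      using Pl lipschitz_on_subset[OF gl] by (intro lipschitz_on_compose) auto
    then show ?thesis unfolding blip_iff using gB by auto
  qed
  have RL0: "0 \<le> (Lp * R)^k" "0 \<le> (Lp * a)^k" using Lp0 a by (simp_all add: R_def)
  have a1: "cmod (T f \<sigma> - T g \<sigma>) \<le> (Lp * R)^k * (B * measure \<mu> (- K))"
  proof -
    have m1: "cmod (T f \<sigma> - T g \<sigma>) \<le> (Lp * R)^k * (\<integral>x. cmod (f x - g x) \<partial>\<mu>)"
      by (rule mass_diff[OF mc ms d\<sigma> bg \<sigma>l])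
    have "(\<integral>x. cmod (f x - g x) \<partial>\<mu>) \<le> 0 * measure \<mu> UNIV + B * measure \<mu> (- K)"
    proof (rule frm_int_bound[OF fr _ K order_refl B0])
      show "continuous_on UNIV (\<lambda>x. f x - g x)"
        using lipschitz_on_diff[OF Lf gl] by (rule lip_cont)
      fix x
      show "cmod (f x - g x) \<le> 0 + B * indicator (- K) x"
      proof (cases "x \<in> K")
        case True
        then show ?thesis using cutpsi_K[of x K \<delta>] unfolding g_def \<psi>_def by simp
      next
        case False
        have "f x - g x = f x * complex_of_real (1 - \<psi> x)" by (simp add: g_def algebra_simps)
        then have "cmod (f x - g x) = cmod (f x) * \<bar>1 - \<psi> x\<bar>" by (simp only: norm_mult norm_of_real)
        also have "\<dots> \<le> B * 1" using B \<psi>1[of x] B0 by (intro mult_mono) auto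
        finally show ?thesis using False by simp
      qed
    qed
    then have i: "(\<integral>x. cmod (f x - g x) \<partial>\<mu>) \<le> B * measure \<mu> (- K)" by simp
    have "(Lp * R)^k * (\<integral>x. cmod (f x - g x) \<partial>\<mu>) \<le> (Lp * R)^k * (B * measure \<mu> (- K))"
      by (rule mult_left_mono[OF i RL0(1)])
    then show ?thesis using m1 by linarith
  qed
  have a2: "T g \<sigma> = T g \<tau>"
  proof (rule loc_replace[OF mc dg\<sigma>])
    show "length \<tau> = k" using lpi unfolding \<tau>_def by simp
    show "\<forall>h\<in>set \<tau>. lip_fun UNIV h" by (rule lipsets(2))
    show "open {x. infdist x K < \<delta>}" by (intro open_Collect_less continuous_intros)
    have "{x\<in>UNIV. g x \<noteq> 0} \<subseteq> {x. infdist x K \<le> \<delta> / 4}"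
    proof
      fix x assume "x \<in> {x\<in>UNIV. g x \<noteq> 0}"
      then have "cutpsi K \<delta> x \<noteq> 0" unfolding g_def \<psi>_def by auto
      then have "infdist x K < \<delta> / 4" by (rule cutpsi_nz[OF d])
      then show "x \<in> {x. infdist x K \<le> \<delta> / 4}" by simp
    qed
    moreover have "closed {x. infdist x K \<le> \<delta> / 4}" by (intro closed_Collect_le continuous_intros)
    ultimately have "closure {x\<in>UNIV. g x \<noteq> 0} \<subseteq> {x. infdist x K \<le> \<delta> / 4}" by (rule closure_minimal)
    then show "supp_in UNIV g \<subseteq> {x. infdist x K < \<delta>}" unfolding supp_in_def using d by auto
    show "\<forall>j<k. \<forall>x\<in>{x. infdist x K < \<delta>}. (\<sigma> ! j) x = (\<tau> ! j) x"
      using r_eq lpi unfolding \<sigma>_def \<tau>_def r_def by (auto simp: less_imp_le)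
  qed
  have a3: "cmod (T g \<tau> - T (g \<circ> P) \<tau>) \<le> (Lp * a)^k * (Lg * e * measure \<mu> UNIV + 2 * B * measure \<mu> (- K))"
  proof -
    have m1: "cmod (T g \<tau> - T (g \<circ> P) \<tau>) \<le> (Lp * a)^k * (\<integral>x. cmod (g x - (g \<circ> P) x) \<partial>\<mu>)"
      by (rule mass_diff[OF mc ms dg\<tau> bgP \<tau>l])
    have Lge: "0 \<le> Lg * e" using e Lf0 B0 d unfolding Lg_def by simp
    obtain CP where CP: "CP-lipschitz_on UNIV (g \<circ> P)" using bgP unfolding blip_iff by blast
    have i: "(\<integral>x. cmod (g x - (g \<circ> P) x) \<partial>\<mu>) \<le> (Lg * e) * measure \<mu> UNIV + (2 * B) * measure \<mu> (- K)"
    proof (rule frm_int_bound[OF fr _ K])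
      show "continuous_on UNIV (\<lambda>x. g x - (g \<circ> P) x)"
        using lipschitz_on_diff[OF gl CP] by (rule lip_cont)
      show "0 \<le> Lg * e" by (rule Lge)
      show "0 \<le> 2 * B" using B0 by simp
      fix x
      show "cmod (g x - (g \<circ> P) x) \<le> Lg * e + 2 * B * indicator (- K) x"
      proof (cases "x \<in> K")
        case True
        have "cmod (g x - (g \<circ> P) x) \<le> Lg * dist x (P x)"
          using lipschitz_onD[OF gl, of x "P x"] by (simp add: dist_norm)
        also have "\<dots> \<le> Lg * e" using Ke True lipschitz_on_nonneg[OF gl]
          by (intro mult_left_mono) (auto simp: dist_norm norm_minus_commute)
        finally show ?thesis using True by simp
      next
        case False
        have "cmod (g x - (g \<circ> P) x) \<le> cmod (g x) + cmod (g (P x))" by (simp add: norm_triangle_ineq4)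
        also have "\<dots> \<le> 2 * B" using gB[of x] gB[of "P x"] by simp
        finally show ?thesis using False Lge by simp
      qed
    qed
    have "(Lp * a)^k * (\<integral>x. cmod (g x - (g \<circ> P) x) \<partial>\<mu>) \<le> (Lp * a)^k * ((Lg * e) * measure \<mu> UNIV + (2 * B) * measure \<mu> (- K))"
      by (rule mult_left_mono[OF i RL0(2)])
    then show ?thesis using m1 by simp
  qed
  have a4: "T (g \<circ> P) \<tau> = 0" using zero bg unfolding \<tau>_def g_def by simp
  have "T f \<sigma> = (T f \<sigma> - T g \<sigma>) + (T g \<tau> - T (g \<circ> P) \<tau>)" using a2 a4 by simp
  then have "cmod (T f \<sigma>) \<le> cmod (T f \<sigma> - T g \<sigma>) + cmod (T g \<tau> - T (g \<circ> P) \<tau>)"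
    by (metis norm_triangle_ineq)
  also have "\<dots> \<le> (Lp * R)^k * (B * measure \<mu> (- K)) + (Lp * a)^k * (Lg * e * measure \<mu> UNIV + 2 * B * measure \<mu> (- K))"
    using a1 a3 by (rule add_mono)
  finally show ?thesis unfolding \<sigma>_def r_def R_def Lg_def .
qed


lemma holo_restrict:
  "holo_on J UNIV U h \<Longrightarrow> holo_on J V (U \<inter> V) h"
  unfolding holo_on_def by (meson IntD1 UNIV_I has_derivative_subset subset_UNIV)

lemma zero_on_proj:
  fixes J :: "'a::real_normed_vector \<Rightarrow> 'a"
    and T :: "('a \<Rightarrow> complex) \<Rightarrow> ('a \<Rightarrow> complex) list \<Rightarrow> complex"
  assumes hyp: "bidimension J V p q (pushforward P T)"
    and d: "dom_ok UNIV (p + q) f \<pi>" and U: "open U" "supp_in UNIV f \<subseteq> U"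
    and cd: "p + 1 \<le> card {j. j < p + q \<and> holo_on J UNIV U (\<pi> ! j)} \<or>
           q + 1 \<le> card {j. j < p + q \<and> holo_on J UNIV U (\<lambda>x. cnj ((\<pi> ! j) x))}"
    and bg: "blip_fun UNIV g" and gz: "\<forall>x. f x = 0 \<longrightarrow> g x = 0"
  shows "T (g \<circ> P) (map (\<lambda>h. h \<circ> P) \<pi>) = 0"
proof -
  have dV: "dom_ok V (p + q) g \<pi>"
  proof -
    have "blip_fun V g" using bg unfolding blip_fun_def lip_fun_def
      by (meson bounded_subset image_mono lipschitz_on_subset subset_UNIV)
    moreover have "\<forall>h\<in>set \<pi>. lip_fun V h" using d unfolding dom_ok_def lip_fun_def
      by (meson lipschitz_on_subset subset_UNIV)
    ultimately show ?thesis using d unfolding dom_ok_def by simp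
  qed
  have oV: "openin (top_of_set V) (U \<inter> V)" using U(1) openin_open by blast
  have sV: "supp_in V g \<subseteq> U \<inter> V"
  proof -
    have "{y\<in>V. g y \<noteq> 0} \<subseteq> {y\<in>UNIV. f y \<noteq> 0}" using gz by auto
    then have "closure {y\<in>V. g y \<noteq> 0} \<subseteq> closure {y\<in>UNIV. f y \<noteq> 0}" by (rule closure_mono)
    then show ?thesis using U(2) unfolding supp_in_def by auto
  qed
  have c1: "card {j. j < p + q \<and> holo_on J UNIV U (\<pi> ! j)} \<le> card {j. j < p + q \<and> holo_on J V (U \<inter> V) (\<pi> ! j)}"
    by (rule card_mono) (auto intro: holo_restrict)
  have c2: "card {j. j < p + q \<and> holo_on J UNIV U (\<lambda>x. cnj ((\<pi> ! j) x))} \<le>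
      card {j. j < p + q \<and> holo_on J V (U \<inter> V) (\<lambda>x. cnj ((\<pi> ! j) x))}"
    by (rule card_mono) (auto intro: holo_restrict)
  have "pushforward P T g \<pi> = 0"
  proof (rule hyp[unfolded bidimension_def, rule_format, OF dV])
    show "\<exists>U. openin (top_of_set V) U \<and> supp_in V g \<subseteq> U \<and>
          (p + 1 \<le> card {j. j < p + q \<and> holo_on J V U (\<pi> ! j)} \<or>
           q + 1 \<le> card {j. j < p + q \<and> holo_on J V U (\<lambda>x. cnj ((\<pi> ! j) x))})"
      using oV sV cd c1 c2 by (intro exI[of _ "U \<inter> V"]) auto
  qed
  then show ?thesis unfolding pushforward_def by simp
qed

lemma common_lip:
  assumes "\<forall>h\<in>set \<pi>. lip_fun UNIV h"
  shows "\<exists>L\<ge>0. \<forall>j<length \<pi>. L-lipschitz_on UNIV (\<pi>!j)"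
proof -
  have "\<forall>j. \<exists>C. j < length \<pi> \<longrightarrow> C-lipschitz_on UNIV (\<pi>!j)"
    using assms unfolding lip_fun_def by (metis nth_mem)
  then obtain Cf where Cf: "\<And>j. j < length \<pi> \<Longrightarrow> (Cf j)-lipschitz_on UNIV (\<pi>!j)" by metis
  define L where "L = (\<Sum>j<length \<pi>. Cf j)"
  have nn: "\<And>j. j \<in> {..<length \<pi>} \<Longrightarrow> 0 \<le> Cf j" using Cf lipschitz_on_nonneg by auto
  have "0 \<le> L" unfolding L_def using nn by (rule sum_nonneg)
  moreover have "L-lipschitz_on UNIV (\<pi>!j)" if "j < length \<pi>" for j
  proof (rule lipschitz_on_le[OF Cf[OF that]])
    show "Cf j \<le> L" unfolding L_def using nn that by (intro member_le_sum) auto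
  qed
  ultimately show ?thesis by blast
qed

lemma arith_bound:
  fixes m c1 c2 B Lf U M :: real
  assumes m: "1 \<le> m" and nn: "0 \<le> c1" "0 \<le> c2" "0 \<le> B" "0 \<le> Lf" "0 \<le> U" "0 \<le> M" and M: "M \<le> 1 / m"
  shows "c1 * (B * M) + c2 * ((Lf + B * (4 / (1 / m))) * (1 / m^2) * U + 2 * B * M)
    \<le> (c1 * B + c2 * ((Lf + 4 * B) * U + 2 * B)) / m"
proof -
  have m0: "0 < m" using m by simp
  have BM: "B * M \<le> B / m" using mult_left_mono[OF M nn(3)] by simp
  have "(Lf + B * (4 / (1 / m))) * (1 / m^2) = Lf / m^2 + 4 * B / m"
    using m0 by (simp add: field_simps power2_eq_square)
  also have "Lf / m^2 \<le> Lf / m"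
  proof -
    have "m \<le> m^2" using m by (simp add: power2_eq_square)
    then show ?thesis using m0 nn(4) by (intro divide_left_mono) auto
  qed
  then have "Lf / m^2 + 4 * B / m \<le> (Lf + 4 * B) / m" by (simp add: add_divide_distrib)
  finally have t: "(Lf + B * (4 / (1 / m))) * (1 / m^2) \<le> (Lf + 4 * B) / m" .
  have "(Lf + B * (4 / (1 / m))) * (1 / m^2) * U + 2 * B * M \<le> (Lf + 4 * B) / m * U + 2 * (B / m)"
    using mult_right_mono[OF t nn(5)] BM by linarith
  also have "\<dots> = ((Lf + 4 * B) * U + 2 * B) / m" by (simp add: add_divide_distrib algebra_simps)
  finally have t2: "(Lf + B * (4 / (1 / m))) * (1 / m^2) * U + 2 * B * M \<le> ((Lf + 4 * B) * U + 2 * B) / m" .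
  have "c1 * (B * M) + c2 * ((Lf + B * (4 / (1 / m))) * (1 / m^2) * U + 2 * B * M)
      \<le> c1 * (B / m) + c2 * (((Lf + 4 * B) * U + 2 * B) / m)"
    using mult_left_mono[OF BM nn(1)] mult_left_mono[OF t2 nn(2)] by linarith
  also have "\<dots> = (c1 * B + c2 * ((Lf + 4 * B) * U + 2 * B)) / m" by (simp add: add_divide_distrib algebra_simps)
  finally show ?thesis .
qed


lemma backward:
  fixes J :: "'a::banach \<Rightarrow> 'a"
    and T :: "('a \<Rightarrow> complex) \<Rightarrow> ('a \<Rightarrow> complex) list \<Rightarrow> complex"
  assumes pap: "projective_approx_property J" and mc: "metric_current k T" and pq: "p + q = k"
    and hyp: "\<forall>V P. csubspace J V \<and> fin_dim V \<and> clin_projection J V P \<longrightarrow>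
       bidimension J V p q (pushforward P T)"
  shows "bidimension J UNIV p q T"
  unfolding bidimension_def
proof (intro allI impI)
  fix f \<pi> assume d: "dom_ok UNIV (p + q) f \<pi>"
    and ex: "\<exists>U. openin (top_of_set UNIV) U \<and> supp_in UNIV f \<subseteq> U \<and>
          (p + 1 \<le> card {j. j < p + q \<and> holo_on J UNIV U (\<pi> ! j)} \<or>
           q + 1 \<le> card {j. j < p + q \<and> holo_on J UNIV U (\<lambda>x. cnj ((\<pi> ! j) x))})"
  obtain U where U: "open U" "supp_in UNIV f \<subseteq> U"
    and cd: "p + 1 \<le> card {j. j < p + q \<and> holo_on J UNIV U (\<pi> ! j)} \<or>
           q + 1 \<le> card {j. j < p + q \<and> holo_on J UNIV U (\<lambda>x. cnj ((\<pi> ! j) x))}"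
    using ex by auto
  obtain a \<E> pp where E: "\<forall>V\<in>\<E>. csubspace J V \<and> fin_dim V" "\<E> \<noteq> {}"
      "\<forall>V\<in>\<E>. \<forall>W\<in>\<E>. \<exists>U\<in>\<E>. V \<subseteq> U \<and> W \<subseteq> U" "closure (\<Union>\<E>) = UNIV"
      "\<forall>V\<in>\<E>. clin_projection J V (pp V) \<and> onorm (pp V) \<le> a"
    using pap unfolding projective_approx_property_def by blast
  have pr: "\<forall>V\<in>\<E>. bounded_linear (pp V) \<and> (\<forall>v\<in>V. pp V v = v) \<and> onorm (pp V) \<le> a"
    using E(5) unfolding clin_projection_def by blast
  have a0: "0 \<le> a"
  proof -
    obtain V0 where "V0 \<in> \<E>" using E(2) by blast
    then show ?thesis using pr onorm_pos_le by (meson order_trans)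
  qed
  obtain \<mu> where fr: "finite_radon_measure \<mu>" and ms: "\<forall>f \<pi>. dom_ok UNIV k f \<pi> \<longrightarrow>
          cmod (T f \<pi>) \<le> (\<Prod>j<k. Lip UNIV (\<pi> ! j)) * (\<integral>x. cmod (f x) \<partial>\<mu>)"
    using mc_mass[OF mc] by blast
  have dk: "dom_ok UNIV k f \<pi>" using d pq by simp
  have lpi: "length \<pi> = k" using dk unfolding dom_ok_def by simp
  obtain Lp where Lp0: "0 \<le> Lp" and Lp: "\<forall>j<k. Lp-lipschitz_on UNIV (\<pi>!j)"
    using common_lip[of \<pi>] dk lpi unfolding dom_ok_def by auto
  obtain Lf B where Lf: "Lf-lipschitz_on UNIV f" and B: "\<forall>x. cmod (f x) \<le> B"
    using dk unfolding dom_ok_def blip_iff by auto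
  have B0: "0 \<le> B" using B norm_ge_zero order_trans by blast
  have Lf0: "0 \<le> Lf" using Lf by (rule lipschitz_on_nonneg)
  have zero: "\<forall>g. blip_fun UNIV g \<longrightarrow> (\<forall>x. f x = 0 \<longrightarrow> g x = 0) \<longrightarrow>
        T (g \<circ> pp V) (map (\<lambda>h. h \<circ> pp V) \<pi>) = 0" if V: "V \<in> \<E>" for V
  proof (intro allI impI)
    fix g assume "blip_fun UNIV g" "\<forall>x. f x = 0 \<longrightarrow> g x = 0"
    moreover have "bidimension J V p q (pushforward (pp V) T)"
      using hyp E(1,5) V by blast
    ultimately show "T (g \<circ> pp V) (map (\<lambda>h. h \<circ> pp V) \<pi>) = 0"
      using zero_on_proj[OF _ d U cd] by blast
  qed
  have seq: "\<exists>K V. compact K \<and> K \<noteq> {} \<and> measure \<mu> (- K) \<le> 1 / real (Suc n) \<and> V \<in> \<E> \<and>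
      (\<forall>x\<in>K. norm (pp V x - x) \<le> 1 / (real (Suc n))^2)" for n
  proof -
    have pos: "(0::real) < 1 / real (Suc n)" by simp
    obtain K where K: "compact K" "measure \<mu> (- K) < 1 / real (Suc n)"
      using frm_compact[OF fr pos] by blast
    have cK: "compact (insert 0 K)" using K(1) by simp
    have "open (- K)" using compact_imp_closed[OF K(1)] by (simp add: open_Compl)
    then have "- K \<in> sets borel" by (rule borel_open)
    then have sK: "- K \<in> sets \<mu>" using frm_sets[OF fr] by simp
    have sub: "- insert 0 K \<subseteq> - K" by blast
    have m1: "measure \<mu> (- insert 0 K) \<le> measure \<mu> (- K)"
      by (rule finite_measure.finite_measure_mono[OF frm_finite[OF fr] sub sK])
    have pos2: "(0::real) < 1 / (real (Suc n))^2" by simp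
    obtain V where V: "V \<in> \<E>" "\<forall>x\<in>insert 0 K. norm (pp V x - x) \<le> 1 / (real (Suc n))^2"
      using approx_compact[OF cK pos2 E(2) E(3) E(4) pr a0] by blast
    have "measure \<mu> (- insert 0 K) \<le> 1 / real (Suc n)" using m1 K(2) by linarith
    then show ?thesis using cK V by blast
  qed
  then have "\<forall>n. \<exists>K V. compact K \<and> K \<noteq> {} \<and> measure \<mu> (- K) \<le> 1 / real (Suc n) \<and> V \<in> \<E> \<and>
      (\<forall>x\<in>K. norm (pp V x - x) \<le> 1 / (real (Suc n))^2)" by blast
  then have "\<exists>Kf. \<forall>n. \<exists>V. compact (Kf n) \<and> Kf n \<noteq> {} \<and> measure \<mu> (- Kf n) \<le> 1 / real (Suc n) \<and> V \<in> \<E> \<and>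
      (\<forall>x\<in>Kf n. norm (pp (V) x - x) \<le> 1 / (real (Suc n))^2)" by (rule choice)
  then obtain Kf where "\<forall>n. \<exists>V. compact (Kf n) \<and> Kf n \<noteq> {} \<and> measure \<mu> (- Kf n) \<le> 1 / real (Suc n) \<and> V \<in> \<E> \<and>
      (\<forall>x\<in>Kf n. norm (pp (V) x - x) \<le> 1 / (real (Suc n))^2)" by blast
  then have "\<exists>Vf. \<forall>n. compact (Kf n) \<and> Kf n \<noteq> {} \<and> measure \<mu> (- Kf n) \<le> 1 / real (Suc n) \<and> Vf n \<in> \<E> \<and>
      (\<forall>x\<in>Kf n. norm (pp (Vf n) x - x) \<le> 1 / (real (Suc n))^2)" by (rule choice)
  then obtain Vf where KV0: "\<forall>n. compact (Kf n) \<and> Kf n \<noteq> {} \<and> measure \<mu> (- Kf n) \<le> 1 / real (Suc n) \<and> Vf n \<in> \<E> \<and>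
      (\<forall>x\<in>Kf n. norm (pp (Vf n) x - x) \<le> 1 / (real (Suc n))^2)" by blast
  have KV: "compact (Kf n) \<and> Kf n \<noteq> {} \<and> measure \<mu> (- Kf n) \<le> 1 / real (Suc n) \<and> Vf n \<in> \<E> \<and>
      (\<forall>x\<in>Kf n. norm (pp (Vf n) x - x) \<le> 1 / (real (Suc n))^2)" for n using KV0 by blast
  define \<delta> where "\<delta> n = 1 / real (Suc n)" for n
  define e where "e n = 1 / (real (Suc n))^2" for n
  define R where "R = 3 * (a + 1) + 2"
  define \<sigma> where "\<sigma> n = map (\<lambda>h. h \<circ> rmap (Kf n) (\<delta> n) (pp (Vf n))) \<pi>" for n
  have rs: "rsetup (Kf n) (pp (Vf n)) a (e n) (\<delta> n)" for n
  proof (rule rsetup.intro)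
    show "bounded_linear (pp (Vf n))" "onorm (pp (Vf n)) \<le> a" using pr KV[of n] by auto
    show "0 \<le> a" by (rule a0)
    show "Kf n \<noteq> {}" "\<forall>z\<in>Kf n. norm (pp (Vf n) z - z) \<le> e n" using KV[of n] unfolding e_def by auto
    show "0 \<le> e n" "0 < \<delta> n" unfolding e_def \<delta>_def by auto
    have "real (Suc n) \<le> (real (Suc n))^2" by (simp add: power2_eq_square)
    then show "e n \<le> \<delta> n" unfolding e_def \<delta>_def by (intro divide_left_mono) auto
  qed
  have \<sigma>l: "\<forall>j<k. (Lp * R)-lipschitz_on UNIV (\<sigma> n ! j)" for n
  proof (intro allI impI)
    fix j assume j: "j < k"
    have rl: "R-lipschitz_on UNIV (rmap (Kf n) (\<delta> n) (pp (Vf n)))"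
      using rsetup.r_lip[OF rs[of n]] unfolding R_def .
    have "Lp-lipschitz_on (rmap (Kf n) (\<delta> n) (pp (Vf n)) ` UNIV) (\<pi>!j)" using Lp j by (auto intro: lipschitz_on_subset)
    then have "(Lp * R)-lipschitz_on UNIV ((\<pi>!j) \<circ> rmap (Kf n) (\<delta> n) (pp (Vf n)))" using rl by (intro lipschitz_on_compose)
    then show "(Lp * R)-lipschitz_on UNIV (\<sigma> n ! j)" using j lpi unfolding \<sigma>_def by simp
  qed
  have d\<sigma>: "dom_ok UNIV k f (\<sigma> n)" for n
  proof -
    have ls: "length (\<sigma> n) = k" using lpi unfolding \<sigma>_def by simp
    have "\<forall>h\<in>set (\<sigma> n). lip_fun UNIV h"
    proof
      fix h assume "h \<in> set (\<sigma> n)"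
      then obtain j where "j < k" "h = \<sigma> n ! j" using ls by (auto simp: in_set_conv_nth)
      then show "lip_fun UNIV h" using \<sigma>l[of n] unfolding lip_fun_def by blast
    qed
    then show ?thesis using dk ls unfolding dom_ok_def by simp
  qed
  have \<delta>0: "\<delta> \<longlonglongrightarrow> 0"
    unfolding \<delta>_def using LIMSEQ_Suc[OF lim_const_over_n[of "1::real"]] by simp
  have cC: "\<exists>C. \<forall>i. \<forall>j<k. C-lipschitz_on UNIV (\<sigma> i ! j)" using \<sigma>l by blast
  have pt: "\<forall>j<k. \<forall>x. (\<lambda>i. (\<sigma> i ! j) x) \<longlonglongrightarrow> (\<pi> ! j) x"
    proof (intro allI impI)
      fix j x assume j: "j < k"
      have b: "norm ((\<sigma> n ! j) x - (\<pi> ! j) x) \<le> (Lp * (2 * (a + 1) + 1)) * \<delta> n" for n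
      proof -
        let ?r = "rmap (Kf n) (\<delta> n) (pp (Vf n))"
        have "norm ((\<sigma> n ! j) x - (\<pi> ! j) x) = dist ((\<pi> ! j) (?r x)) ((\<pi> ! j) x)"
          using j lpi unfolding \<sigma>_def by (simp add: dist_norm)
        also have "\<dots> \<le> Lp * dist (?r x) x" using Lp j by (auto intro: lipschitz_onD)
        also have "\<dots> \<le> Lp * (2 * (a + 1) * \<delta> n + e n)"
          using rsetup.r_close[OF rs[of n], of x] Lp0 by (intro mult_left_mono) (auto simp: dist_norm)
        also have "\<dots> \<le> Lp * (2 * (a + 1) * \<delta> n + \<delta> n)"
          using rsetup.e(2)[OF rs[of n]] Lp0 by (intro mult_left_mono) auto
        also have "\<dots> = (Lp * (2 * (a + 1) + 1)) * \<delta> n" by (simp add: algebra_simps)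
        finally show ?thesis .
      qed
      have "(\<lambda>n. (\<sigma> n ! j) x - (\<pi> ! j) x) \<longlonglongrightarrow> 0"
        by (rule Lim_null_comparison[OF always_eventually[OF allI[OF b]]])
           (use tendsto_mult_right_zero[OF \<delta>0] in auto)
      then show "(\<lambda>i. (\<sigma> i ! j) x) \<longlonglongrightarrow> (\<pi> ! j) x" by (rule LIM_zero_cancel)
    qed
  have conv: "(\<lambda>n. T f (\<sigma> n)) \<longlonglongrightarrow> T f \<pi>"
    using mc_cont[OF mc] dk d\<sigma> pt cC by blast
  define D where "D = (Lp * R)^k * B + (Lp * a)^k * ((Lf + 4 * B) * measure \<mu> UNIV + 2 * B)"
  have bnd: "norm (T f (\<sigma> n)) \<le> D * \<delta> n" for n
  proof -
    have "cmod (T f (\<sigma> n)) \<le> (Lp * (3 * (a + 1) + 2))^k * (B * measure \<mu> (- Kf n)) +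
     (Lp * a)^k * ((Lf + B * (4 / \<delta> n)) * e n * measure \<mu> UNIV + 2 * B * measure \<mu> (- Kf n))"
      unfolding \<sigma>_def
      by (rule est_step[OF mc fr ms dk Lp Lp0 Lf B rs[of n]]) (use KV[of n] zero in auto)
    also have "\<dots> \<le> D / real (Suc n)"
      unfolding D_def R_def \<delta>_def e_def
      by (rule arith_bound) (use Lp0 a0 B0 Lf0 KV[of n] in auto)
    finally show ?thesis by (simp add: \<delta>_def)
  qed
  have "(\<lambda>n. T f (\<sigma> n)) \<longlonglongrightarrow> 0"
    by (rule Lim_null_comparison[OF always_eventually[OF allI[OF bnd]]])
       (use tendsto_mult_right_zero[OF \<delta>0] in auto)
  then show "T f \<pi> = 0" using conv LIMSEQ_unique by blast
qed


theorem proposition5p5: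
  fixes J :: "'a::banach \<Rightarrow> 'a"
    and T :: "('a \<Rightarrow> complex) \<Rightarrow> ('a \<Rightarrow> complex) list \<Rightarrow> complex"
    and k p q :: nat
  assumes "complex_structure J"
    and "projective_approx_property J"
    and "metric_current k T"
    and "p + q = k"
  shows "bidimension J UNIV p q T \<longleftrightarrow>
    (\<forall>V P. csubspace J V \<and> fin_dim V \<and> clin_projection J V P \<longrightarrow>
       bidimension J V p q (pushforward P T))"
proof
  assume bd: "bidimension J UNIV p q T"
  show "\<forall>V P. csubspace J V \<and> fin_dim V \<and> clin_projection J V P \<longrightarrow>
       bidimension J V p q (pushforward P T)"
    using forward[OF bd] by blast
next
  assume hyp: "\<forall>V P. csubspace J V \<and> fin_dim V \<and> clin_projection J V P \<longrightarrow>
       bidimension J V p q (pushforward P T)"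
  show "bidimension J UNIV p q T"
    by (rule backward[OF assms(2) assms(3) assms(4) hyp])
qed

end
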